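(* Let $\mathfrak k$ be the maximal compact subalgebra of a Kac--Moody algebra over a field $F$ of characteristic $0$ with simply laced diagram $D=(V,E)$, with Berman generators $X_1,\dots,X_n$, and let $L=F(I)$ with $I^2=-1$. (a) If $\rho:\mathfrak k\to\operatorname{End}(L^s)$ is a generalized spin representation, then $\rho(X_i)\rho(X_j)=\rho(X_j)\rho(X_i)$ whenever $i\ne j$ and $\{v_i,v_j\}\notin E$, and $\rho(X_i)\rho(X_j)=-\rho(X_j)\rho(X_i)$ whenever $\{v_i,v_j\}\in E$. (b) Conversely, if $A_1,\dots,A_n\in L^{s\times s}$ satisfy $A_i^2=-\tfrac14\mathrm{id}_s$ for all $i$, $A_iA_j=A_jA_i$ for $i\ne j$ non-adjacent, and $A_iA_j=-A_jA_i$ for $v_i,v_j$ adjacent, then $X_i\mapsto A_i$ extends to a Lie algebra homomorphism $\mathfrak k\to\operatorname{End}(L^s)$, which is a generalized spin representation.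
   Context: Berman's theorem: $\mathfrak k$ is generated by $X_i=e_i-f_i$ and is the Lie algebra with generators $X_1,\dots,X_n$ and defining relations $[X_i,[X_i,X_j]]=-X_j$ if $v_i,v_j$ are adjacent and $[X_i,X_j]=0$ for non-adjacent $i\ne j$. Here $\mathfrak k$ is viewed as a Lie algebra over $F$ and $\operatorname{End}(L^s)$ as an $F$-Lie algebra with the commutator bracket. A generalized spin representation of $\mathfrak k$ is a Lie algebra homomorphism $\rho:\mathfrak k\to\operatorname{End}(L^s)$ (for some $s\ge1$) such that $\rho(X_i)^2=-\tfrac14\,\mathrm{id}_s$ for $i=1,\dots,n$. *)

theory Defs
  imports "Jordan_Normal_Form.Matrix"
begin

datatype 'f lie_term =
    Gen nat
  | LZero
  | LAdd "'f lie_term" "'f lie_term"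
  | LSmul 'f "'f lie_term"
  | LBr "'f lie_term" "'f lie_term"

fun gens :: "'f lie_term \<Rightarrow> nat set" where
  "gens (Gen i) = {i}"
| "gens LZero = {}"
| "gens (LAdd x y) = gens x \<union> gens y"
| "gens (LSmul c x) = gens x"
| "gens (LBr x y) = gens x \<union> gens y"

definition kterm :: "nat \<Rightarrow> 'f lie_term \<Rightarrow> bool" where
  "kterm n t \<longleftrightarrow> gens t \<subseteq> {1..n}"

text \<open>The congruence defining the Lie algebra k (Berman presentation):
  F-Lie algebra axioms plus the defining relations for the diagram with
  adjacency relation E on vertices 1..n.\<close>
inductive kcong :: "nat \<Rightarrow> (nat \<Rightarrow> nat \<Rightarrow> bool) \<Rightarrow> 'f::field lie_term \<Rightarrow> 'f lie_term \<Rightarrow> bool"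
  for n :: nat and E :: "nat \<Rightarrow> nat \<Rightarrow> bool" where
  refl: "kcong n E x x"
| sym: "kcong n E x y \<Longrightarrow> kcong n E y x"
| trans: "kcong n E x y \<Longrightarrow> kcong n E y z \<Longrightarrow> kcong n E x z"
| cong_add: "kcong n E x x' \<Longrightarrow> kcong n E y y' \<Longrightarrow> kcong n E (LAdd x y) (LAdd x' y')"
| cong_smul: "kcong n E x x' \<Longrightarrow> kcong n E (LSmul c x) (LSmul c x')"
| cong_br: "kcong n E x x' \<Longrightarrow> kcong n E y y' \<Longrightarrow> kcong n E (LBr x y) (LBr x' y')"
| add_assoc: "kcong n E (LAdd (LAdd x y) z) (LAdd x (LAdd y z))"
| add_comm: "kcong n E (LAdd x y) (LAdd y x)"
| add_zero: "kcong n E (LAdd x LZero) x"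
| add_neg: "kcong n E (LAdd x (LSmul (-1) x)) LZero"
| smul_smul: "kcong n E (LSmul a (LSmul b x)) (LSmul (a * b) x)"
| smul_one: "kcong n E (LSmul 1 x) x"
| smul_add: "kcong n E (LSmul a (LAdd x y)) (LAdd (LSmul a x) (LSmul a y))"
| add_smul: "kcong n E (LSmul (a + b) x) (LAdd (LSmul a x) (LSmul b x))"
| br_add_left: "kcong n E (LBr (LAdd x y) z) (LAdd (LBr x z) (LBr y z))"
| br_add_right: "kcong n E (LBr x (LAdd y z)) (LAdd (LBr x y) (LBr x z))"
| br_smul_left: "kcong n E (LBr (LSmul a x) y) (LSmul a (LBr x y))"
| br_smul_right: "kcong n E (LBr x (LSmul a y)) (LSmul a (LBr x y))"
| br_alt: "kcong n E (LBr x x) LZero"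
| jacobi: "kcong n E (LAdd (LBr x (LBr y z)) (LAdd (LBr y (LBr z x)) (LBr z (LBr x y)))) LZero"
| rel_adj: "\<lbrakk>i \<in> {1..n}; j \<in> {1..n}; E i j\<rbrakk> \<Longrightarrow>
      kcong n E (LBr (Gen i) (LBr (Gen i) (Gen j))) (LSmul (-1) (Gen j))"
| rel_nonadj: "\<lbrakk>i \<in> {1..n}; j \<in> {1..n}; i \<noteq> j; \<not> E i j\<rbrakk> \<Longrightarrow>
      kcong n E (LBr (Gen i) (Gen j)) LZero"

text \<open>An F-Lie algebra homomorphism k -> End(L^s) (s x s matrices over L, commutator
  bracket, F acting on L via the embedding emb), given on representatives.\<close>
definition k_lie_hom :: "nat \<Rightarrow> (nat \<Rightarrow> nat \<Rightarrow> bool) \<Rightarrow> ('f::field \<Rightarrow> 'l::field) \<Rightarrow> nat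
    \<Rightarrow> ('f lie_term \<Rightarrow> 'l mat) \<Rightarrow> bool" where
  "k_lie_hom n E emb s \<rho> \<longleftrightarrow>
     (\<forall>t. kterm n t \<longrightarrow> \<rho> t \<in> carrier_mat s s) \<and>
     (\<forall>t u. kterm n t \<longrightarrow> kterm n u \<longrightarrow> kcong n E t u \<longrightarrow> \<rho> t = \<rho> u) \<and>
     (\<forall>t u. kterm n t \<longrightarrow> kterm n u \<longrightarrow>
         \<rho> (LAdd t u) = \<rho> t + \<rho> u \<and> \<rho> (LBr t u) = \<rho> t * \<rho> u - \<rho> u * \<rho> t) \<and>
     (\<forall>c t. kterm n t \<longrightarrow> \<rho> (LSmul c t) = emb c \<cdot>\<^sub>m \<rho> t)"

definition gen_spin_rep :: "nat \<Rightarrow> (nat \<Rightarrow> nat \<Rightarrow> bool) \<Rightarrow> ('f::field \<Rightarrow> 'l::field) \<Rightarrow> nat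
    \<Rightarrow> ('f lie_term \<Rightarrow> 'l mat) \<Rightarrow> bool" where
  "gen_spin_rep n E emb s \<rho> \<longleftrightarrow> s \<ge> 1 \<and> k_lie_hom n E emb s \<rho> \<and>
     (\<forall>i\<in>{1..n}. \<rho> (Gen i) * \<rho> (Gen i) = (- (1/4)) \<cdot>\<^sub>m 1\<^sub>m s)"

end

theory Submission imports Defs begin

lemmas dist_s = mult_minus_distrib_mat[where nr=s and n=s and nc=s] minus_mult_distrib_mat[where nr=s and n=s and nc=s]
   mult_add_distrib_mat[where nr=s and n=s and nc=s] add_mult_distrib_mat[where nr=s and n=s and nc=s]
   mult_smult_distrib[where nr=s and n=s and nc=s] mult_smult_assoc_mat[where nr=s and n=s and nc=s] for s

lemma jac:
  fixes x y z :: "'a::field mat"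
  assumes c: "x \<in> carrier_mat s s" "y \<in> carrier_mat s s" "z \<in> carrier_mat s s"
  shows "(x * (y * z - z * y) - (y * z - z * y) * x) + ((y * (z * x - x * z) - (z * x - x * z) * y)
     + (z * (x * y - y * x) - (x * y - y * x) * z)) = 0\<^sub>m s s"
proof -
  have "(x * (y * z - z * y) - (y * z - z * y) * x) + ((y * (z * x - x * z) - (z * x - x * z) * y)
     + (z * (x * y - y * x) - (x * y - y * x) * z)) =
    (x * y * z - x * z * y - (y * z * x - z * y * x)) + ((y * z * x - y * x * z - (z * x * y - x * z * y))
     + (z * x * y - z * y * x - (x * y * z - y * x * z)))"
    using c by (simp add: dist_s[where s=s])
  also have "\<dots> = 0\<^sub>m s s" using c by (intro eq_matI) auto
  finally show ?thesis .
qed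

fun rho :: "nat \<Rightarrow> nat \<Rightarrow> (nat \<Rightarrow> 'l::field mat) \<Rightarrow> ('f \<Rightarrow> 'l) \<Rightarrow> 'f lie_term \<Rightarrow> 'l mat" where
  "rho s n A emb (Gen i) = (if i \<in> {1..n} then A i else 0\<^sub>m s s)"
| "rho s n A emb LZero = 0\<^sub>m s s"
| "rho s n A emb (LAdd x y) = rho s n A emb x + rho s n A emb y"
| "rho s n A emb (LSmul c x) = emb c \<cdot>\<^sub>m rho s n A emb x"
| "rho s n A emb (LBr x y) = rho s n A emb x * rho s n A emb y - rho s n A emb y * rho s n A emb x"

lemma rho_carrier: "(\<forall>i\<in>{1..n}. A i \<in> carrier_mat s s) \<Longrightarrow> rho s n A emb t \<in> carrier_mat s s"
  by (induction t) auto

lemma cancel8: "(x::'a::field) * 8 = 32 * y \<Longrightarrow> (8::'a) \<noteq> 0 \<Longrightarrow> 4 * y = x"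
proof -
  assume h: "x * 8 = 32 * y" and e: "(8::'a) \<noteq> 0"
  have "8 * x = 8 * (4 * y)" using h by (simp add: mult.commute)
  thus ?thesis using mult_left_cancel[OF e] by metis
qed

lemma adj_rel:
  fixes a b :: "'a::field mat"
  assumes c: "a \<in> carrier_mat s s" "b \<in> carrier_mat s s"
    and sq: "a * a = (- (1/4)) \<cdot>\<^sub>m 1\<^sub>m s" and anti: "a * b = - (b * a)" and four: "(4::'a) \<noteq> 0"
  shows "a * (a * b - b * a) - (a * b - b * a) * a = (-1) \<cdot>\<^sub>m b"
proof -
  have e1: "a * (a * b) = (- (1/4)) \<cdot>\<^sub>m b"
    using c by (simp add: assoc_mult_mat[symmetric, of a s s a s b s] sq dist_s[where s=s])
  have e2: "(b * a) * a = (- (1/4)) \<cdot>\<^sub>m b"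
    using c by (simp add: assoc_mult_mat[of b s s a s a s] sq dist_s[where s=s])
  have e3': "a * (b * a) = - ((b * a) * a)" 
    using c by (simp add: assoc_mult_mat[symmetric, of a s s b s a s] anti)
  have e3: "a * (b * a) = (1/4) \<cdot>\<^sub>m b" unfolding e3' e2 using c by (intro eq_matI) auto
  have "a * (a * b - b * a) - (a * b - b * a) * a = (a * (a * b) - a * (b * a)) - ((a * b) * a - (b * a) * a)"
    using c by (simp add: dist_s[where s=s])
  also have "\<dots> = (a * (a * b) - a * (b * a)) - (a * (b * a) - (b * a) * a)"
    using c by (simp add: assoc_mult_mat[of a s s b s a s])
  also have "\<dots> = (-1) \<cdot>\<^sub>m b" proof -
    have "(16::'a) \<noteq> 0" using four
        by (metis mult_eq_0_iff numeral_times_numeral semiring_norm(12,13,16))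
    thus ?thesis unfolding e1 e2 e3 using c four by (intro eq_matI) (auto simp: field_simps)
  qed
  finally show ?thesis .
qed

lemma adj_conv:
  fixes a b :: "'a::field mat"
  assumes c: "a \<in> carrier_mat s s" "b \<in> carrier_mat s s"
    and sq: "a * a = (- (1/4)) \<cdot>\<^sub>m 1\<^sub>m s" and four: "(4::'a) \<noteq> 0"
    and h: "a * (a * b - b * a) - (a * b - b * a) * a = (-1) \<cdot>\<^sub>m b"
  shows "a * b = - (b * a)"
proof -
  have e1: "a * (a * b) = (- (1/4)) \<cdot>\<^sub>m b"
    using c by (simp add: assoc_mult_mat[symmetric, of a s s a s b s] sq dist_s[where s=s])
  have e2: "(b * a) * a = (- (1/4)) \<cdot>\<^sub>m b"
    using c by (simp add: assoc_mult_mat[of b s s a s a s] sq dist_s[where s=s])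
  have "a * (a * b - b * a) - (a * b - b * a) * a = (a * (a * b) - (a * b) * a) - ((a * b) * a - (b * a) * a)"
    using c by (simp add: dist_s[where s=s] assoc_mult_mat[of a s s b s a s])
  hence h2: "((- (1/4)) \<cdot>\<^sub>m b - (a * b) * a) - ((a * b) * a - (- (1/4)) \<cdot>\<^sub>m b) = (-1) \<cdot>\<^sub>m b"
    using h e1 e2 by simp
  have M: "(a * b) * a = (1/4) \<cdot>\<^sub>m b"
  proof (rule eq_matI)
    fix i j assume ij: "i < dim_row ((1/4) \<cdot>\<^sub>m b)" "j < dim_col ((1/4) \<cdot>\<^sub>m b)"
    have *: "(((- (1/4)) \<cdot>\<^sub>m b - (a * b) * a) - ((a * b) * a - (- (1/4)) \<cdot>\<^sub>m b)) $$ (i,j) = ((-1) \<cdot>\<^sub>m b) $$ (i,j)" using h2 by simp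
    show "(a * b * a) $$ (i, j) = ((1/4) \<cdot>\<^sub>m b) $$ (i, j)"
      proof -
      have "(16::'a) \<noteq> 0" "(8::'a) \<noteq> 0" "(2::'a) \<noteq> 0" using four
        by (metis mult_eq_0_iff numeral_times_numeral semiring_norm(12,13,16))+
      thus ?thesis using * four ij c by (auto simp: field_simps intro!: cancel8)
    qed
  qed (use c in auto)
  have "(a * b) * (a * a) = (- (1/4)) \<cdot>\<^sub>m (a * b)"
    using c by (simp add: sq dist_s[where s=s])
  moreover have "(a * b) * (a * a) = (1/4) \<cdot>\<^sub>m (b * a)"
    using c by (simp add: assoc_mult_mat[symmetric, of "a*b" s s a s a s] M dist_s[where s=s])
  ultimately have h3: "(- (1/4)) \<cdot>\<^sub>m (a * b) = (1/4) \<cdot>\<^sub>m (b * a)" by simp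
  show ?thesis
  proof (rule eq_matI)
    fix i j assume ij: "i < dim_row (- (b * a))" "j < dim_col (- (b * a))"
    from arg_cong[OF h3, of "\<lambda>m. m $$ (i,j)"] ij c
    show "(a * b) $$ (i, j) = (- (b * a)) $$ (i, j)"
      using four ij c by (auto simp: field_simps) (metis minus_minus)
  qed (use c in auto)
qed

lemma rho_dims: "(\<forall>i\<in>{1..n}. A i \<in> carrier_mat s s) \<Longrightarrow> dim_row (rho s n A emb t) = s"
   "(\<forall>i\<in>{1..n}. A i \<in> carrier_mat s s) \<Longrightarrow> dim_col (rho s n A emb t) = s"
  using rho_carrier[of n A s emb t] by auto

lemma rho_cong:
  fixes emb :: "'f::field \<Rightarrow> 'l::field"
  assumes car: "\<forall>i\<in>{1..n}. A i \<in> carrier_mat s s"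
    and sq: "\<forall>i\<in>{1..n}. A i * A i = (- (1/4)) \<cdot>\<^sub>m 1\<^sub>m s"
    and comm: "\<forall>i\<in>{1..n}. \<forall>j\<in>{1..n}. i \<noteq> j \<and> \<not> E i j \<longrightarrow> A i * A j = A j * A i"
    and anti: "\<forall>i\<in>{1..n}. \<forall>j\<in>{1..n}. E i j \<longrightarrow> A i * A j = - (A j * A i)"
    and four: "(4::'l) \<noteq> 0"
    and emb_one: "emb 1 = 1"
    and emb_add: "\<And>a b. emb (a + b) = emb a + emb b"
    and emb_mult: "\<And>a b. emb (a * b) = emb a * emb b"
    and emb_m1: "emb (-1) = -1"
  shows "kcong n E t u \<Longrightarrow> rho s n A emb t = rho s n A emb u"
proof (induction rule: kcong.induct)
  note C = rho_carrier[OF car] and D = rho_dims[OF car]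
  case (jacobi x y z) show ?case using jac[OF C C C] by simp
next
  case (rel_adj i j)
  then show ?case using adj_rel[of "A i" s "A j"] car sq anti four emb_m1 by simp
next
  case (rel_nonadj i j)
  then have "A i * A j = A j * A i" using comm by blast
  moreover have "A j * A i \<in> carrier_mat s s" using rel_nonadj car
    by (metis atLeastAtMost_iff mult_carrier_mat)
  ultimately show ?case using rel_nonadj by simp
qed (simp_all add: rho_carrier[OF car] rho_dims[OF car] dist_s[where s=s] emb_one emb_add emb_mult emb_m1,
     (rule eq_matI, auto simp: rho_carrier[OF car] rho_dims[OF car] algebra_simps)+)

theorem mainTheorem5:
  fixes emb :: "'f::field_char_0 \<Rightarrow> 'l::field" and I :: 'l
    and n :: nat and E :: "nat \<Rightarrow> nat \<Rightarrow> bool"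
  assumes emb_inj: "inj emb"
    and emb_one: "emb 1 = 1"
    and emb_add: "\<And>a b. emb (a + b) = emb a + emb b"
    and emb_mult: "\<And>a b. emb (a * b) = emb a * emb b"
    and I_sq: "I * I = -1"
    and L_gen: "\<And>x. \<exists>a b. x = emb a + emb b * I"
    and E_sym: "\<And>i j. E i j \<Longrightarrow> E j i"
    and E_irrefl: "\<And>i. \<not> E i i"
  shows
    "(\<forall>s \<rho>. gen_spin_rep n E emb s \<rho> \<longrightarrow>
        (\<forall>i\<in>{1..n}. \<forall>j\<in>{1..n}.
           (i \<noteq> j \<and> \<not> E i j \<longrightarrow> \<rho> (Gen i) * \<rho> (Gen j) = \<rho> (Gen j) * \<rho> (Gen i)) \<and>
           (E i j \<longrightarrow> \<rho> (Gen i) * \<rho> (Gen j) = - (\<rho> (Gen j) * \<rho> (Gen i)))))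
   \<and>
    (\<forall>s (A :: nat \<Rightarrow> 'l mat). s \<ge> 1 \<longrightarrow>
        (\<forall>i\<in>{1..n}. A i \<in> carrier_mat s s) \<longrightarrow>
        (\<forall>i\<in>{1..n}. A i * A i = (- (1/4)) \<cdot>\<^sub>m 1\<^sub>m s) \<longrightarrow>
        (\<forall>i\<in>{1..n}. \<forall>j\<in>{1..n}. i \<noteq> j \<and> \<not> E i j \<longrightarrow> A i * A j = A j * A i) \<longrightarrow>
        (\<forall>i\<in>{1..n}. \<forall>j\<in>{1..n}. E i j \<longrightarrow> A i * A j = - (A j * A i)) \<longrightarrow>
        (\<exists>\<rho>. k_lie_hom n E emb s \<rho> \<and> (\<forall>i\<in>{1..n}. \<rho> (Gen i) = A i) \<and>
              gen_spin_rep n E emb s \<rho>))"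
proof -
  have emb0: "emb 0 = 0"
  proof -
    have "emb 0 + emb 0 = emb 0 + 0" using emb_add[of 0 0] by (metis add.right_neutral)
    thus ?thesis using add_left_cancel by blast
  qed
  have emb_m1: "emb (-1) = -1" using emb_add[of "-1" 1] emb0 emb_one
    by (simp add: eq_neg_iff_add_eq_0)
  have "emb 4 = 4" using emb_add[of 2 2] emb_add[of 1 1] emb_one by simp
  moreover have "emb (4::'f) \<noteq> emb 0" using emb_inj by (simp add: inj_eq)
  ultimately have four: "(4::'l) \<noteq> 0" using emb0 by simp
  have two1: "(2::'l) \<noteq> 1" by (metis one_add_one add_cancel_right_right one_neq_zero)
  show ?thesis
  proof (intro conjI allI impI)
    fix s \<rho> assume g: "gen_spin_rep n E emb s \<rho>"
    hence h: "k_lie_hom n E emb s \<rho>" and sq: "\<forall>i\<in>{1..n}. \<rho> (Gen i) * \<rho> (Gen i) = (- (1/4)) \<cdot>\<^sub>m 1\<^sub>m s"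
      unfolding gen_spin_rep_def by auto
    have car: "\<And>t. kterm n t \<Longrightarrow> \<rho> t \<in> carrier_mat s s"
      and cg: "\<And>t u. kterm n t \<Longrightarrow> kterm n u \<Longrightarrow> kcong n E t u \<Longrightarrow> \<rho> t = \<rho> u"
      and ad: "\<And>t u. kterm n t \<Longrightarrow> kterm n u \<Longrightarrow> \<rho> (LAdd t u) = \<rho> t + \<rho> u"
      and br: "\<And>t u. kterm n t \<Longrightarrow> kterm n u \<Longrightarrow> \<rho> (LBr t u) = \<rho> t * \<rho> u - \<rho> u * \<rho> t"
      and sm: "\<And>c t. kterm n t \<Longrightarrow> \<rho> (LSmul c t) = emb c \<cdot>\<^sub>m \<rho> t"
      using h unfolding k_lie_hom_def by auto
    have kz: "kterm n LZero" by (simp add: kterm_def)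
    have kg: "\<And>i. i \<in> {1..n} \<Longrightarrow> kterm n (Gen i)" by (simp add: kterm_def)
    have kb: "\<And>t u. kterm n t \<Longrightarrow> kterm n u \<Longrightarrow> kterm n (LBr t u)" by (simp add: kterm_def)
    have ka: "\<And>t u. kterm n t \<Longrightarrow> kterm n u \<Longrightarrow> kterm n (LAdd t u)" by (simp add: kterm_def)
    have ks: "\<And>c t. kterm n t \<Longrightarrow> kterm n (LSmul c t)" by (simp add: kterm_def)
    have z0: "\<rho> LZero + \<rho> LZero = \<rho> LZero"
      using cg[OF ka[OF kz kz] kz kcong.add_zero] ad[OF kz kz] by simp
    have cz: "\<rho> LZero \<in> carrier_mat s s" by (rule car[OF kz])
    have z: "\<rho> LZero = 0\<^sub>m s s"
    proof (rule eq_matI)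
      fix i j assume "i < dim_row (0\<^sub>m s s :: 'l mat)" "j < dim_col (0\<^sub>m s s :: 'l mat)"
      with cz have "(\<rho> LZero + \<rho> LZero) $$ (i,j) = \<rho> LZero $$ (i,j)" using z0 by simp
      with cz \<open>i < _\<close> \<open>j < _\<close> show "\<rho> LZero $$ (i, j) = 0\<^sub>m s s $$ (i, j)" using two1 by simp
    qed (use cz in auto)
    show "\<forall>i\<in>{1..n}. \<forall>j\<in>{1..n}.
           (i \<noteq> j \<and> \<not> E i j \<longrightarrow> \<rho> (Gen i) * \<rho> (Gen j) = \<rho> (Gen j) * \<rho> (Gen i)) \<and>
           (E i j \<longrightarrow> \<rho> (Gen i) * \<rho> (Gen j) = - (\<rho> (Gen j) * \<rho> (Gen i)))"
    proof (intro ballI conjI impI)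
      fix i j assume i: "i \<in> {1..n}" and j: "j \<in> {1..n}"
      have ci: "\<rho> (Gen i) \<in> carrier_mat s s" and cj: "\<rho> (Gen j) \<in> carrier_mat s s"
        using car kg i j by auto
      {
        assume "i \<noteq> j \<and> \<not> E i j"
        hence "kcong n E (LBr (Gen i) (Gen j)) LZero" using i j kcong.rel_nonadj by blast
        hence e: "\<rho> (Gen i) * \<rho> (Gen j) - \<rho> (Gen j) * \<rho> (Gen i) = 0\<^sub>m s s"
          using cg[OF kb[OF kg[OF i] kg[OF j]] kz] br[OF kg[OF i] kg[OF j]] z by simp
        show "\<rho> (Gen i) * \<rho> (Gen j) = \<rho> (Gen j) * \<rho> (Gen i)"
        proof (rule eq_matI)
          fix a b assume ab: "a < dim_row (\<rho> (Gen j) * \<rho> (Gen i))" "b < dim_col (\<rho> (Gen j) * \<rho> (Gen i))"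
          have "(\<rho> (Gen i) * \<rho> (Gen j) - \<rho> (Gen j) * \<rho> (Gen i)) $$ (a,b) = 0\<^sub>m s s $$ (a,b)"
            using e by simp
          with ab ci cj show "(\<rho> (Gen i) * \<rho> (Gen j)) $$ (a, b) = (\<rho> (Gen j) * \<rho> (Gen i)) $$ (a, b)"
            by simp
        qed (use ci cj in auto)
      }
      {
        assume "E i j"
        hence "kcong n E (LBr (Gen i) (LBr (Gen i) (Gen j))) (LSmul (-1) (Gen j))"
          using i j kcong.rel_adj by blast
        hence "\<rho> (Gen i) * (\<rho> (Gen i) * \<rho> (Gen j) - \<rho> (Gen j) * \<rho> (Gen i))
             - (\<rho> (Gen i) * \<rho> (Gen j) - \<rho> (Gen j) * \<rho> (Gen i)) * \<rho> (Gen i) = (-1) \<cdot>\<^sub>m \<rho> (Gen j)"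
          using cg[OF kb[OF kg[OF i] kb[OF kg[OF i] kg[OF j]]] ks[of "Gen j" "-1", OF kg[OF j]]]
            br[OF kg[OF i] kb[OF kg[OF i] kg[OF j]]] br[OF kg[OF i] kg[OF j]] sm[of "Gen j" "-1", OF kg[OF j]] emb_m1
          by simp
        thus "\<rho> (Gen i) * \<rho> (Gen j) = - (\<rho> (Gen j) * \<rho> (Gen i))"
          using adj_conv[OF ci cj _ four] sq i by blast
      }
    qed
  next
    fix s and A :: "nat \<Rightarrow> 'l mat"
    assume s1: "s \<ge> 1" and car: "\<forall>i\<in>{1..n}. A i \<in> carrier_mat s s"
      and sq: "\<forall>i\<in>{1..n}. A i * A i = (- (1/4)) \<cdot>\<^sub>m 1\<^sub>m s"
      and comm: "\<forall>i\<in>{1..n}. \<forall>j\<in>{1..n}. i \<noteq> j \<and> \<not> E i j \<longrightarrow> A i * A j = A j * A i"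
      and anti: "\<forall>i\<in>{1..n}. \<forall>j\<in>{1..n}. E i j \<longrightarrow> A i * A j = - (A j * A i)"
    let ?r = "rho s n A emb"
    have kh: "k_lie_hom n E emb s ?r"
      unfolding k_lie_hom_def
      using rho_carrier[OF car] rho_cong[OF car sq comm anti four emb_one emb_add emb_mult emb_m1]
      by auto
    have gi: "\<forall>i\<in>{1..n}. ?r (Gen i) = A i" by simp
    show "\<exists>\<rho>. k_lie_hom n E emb s \<rho> \<and> (\<forall>i\<in>{1..n}. \<rho> (Gen i) = A i) \<and> gen_spin_rep n E emb s \<rho>"
      using kh gi sq s1 unfolding gen_spin_rep_def by (intro exI[of _ ?r]) auto
  qed
qed

end
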